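(* Let $a>4$, $d\ge 4$, and let $G$ be generated by the security model $\mathcal{S}(n,a,d)$. Let $b_0>0$ be a constant, $\delta=\log^{-b_0}n$, $T_0=(1-\delta)n$, and let $b_1$ satisfy $2<b_1<a-b_0$. Then with probability $1-o(1)$, every homochromatic set created before time step $T_0$ has size $\Omega(\log^{b_1}n)$.
   Context: Security model $\mathcal{S}(n,a,d)$ (homophyly exponent $a$, natural number $d$): start with an initial graph $G_2$ on two nodes, each of which is a seed node with its own distinct color. For $i=3,\dots,n$, given $G_{i-1}$, let $p_i=(\log i)^{-a}$ and create a new node $v$ (at time step $i$). With probability $p_i$, $v$ receives a brand-new color $c$ and is called the seed node of $c$; then one edge $(v,u)$ is added with $u$ chosen with probability proportional to degrees in $G_{i-1}$, and $d-1$ edges $(v,u_j)$ are added, each $u_j$ chosen uniformly at random among all seed nodes of $G_{i-1}$. Otherwise, $v$ picks a color $c$ uniformly at random among all colors present in $G_{i-1}$, takes color $c$, and $d$ edges $(v,u_j)$ are added, each $u_j$ chosen with probability proportional to degree among the nodes of color $c$ in $G_{i-1}$. The network is $G=G_n$. A homochromatic set is the set of all nodes of $G$ of one color; it is created at the time step its seed node is created. *)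

theory Defs
  imports "HOL-Probability.Probability"
begin

text \<open>State of the security model after time step i: nodes are 1..i.
  The colour of a node is identified with the time step (= node index) at which
  the seed node of that colour was created; hence v is a seed node iff col v = v.
  Edges are kept as a list (multigraph); the degree of a node is its number of
  occurrences among edge endpoints.\<close>

type_synonym sstate = "(nat \<Rightarrow> nat) \<times> (nat \<times> nat) list"

definition endpoints :: "(nat \<times> nat) list \<Rightarrow> nat multiset" where
  "endpoints E = mset (map fst E) + mset (map snd E)"

fun iid_pmf :: "nat \<Rightarrow> 'a pmf \<Rightarrow> 'a list pmf" where
  "iid_pmf 0 p = return_pmf []"
| "iid_pmf (Suc k) p = p \<bind> (\<lambda>x. iid_pmf k p \<bind> (\<lambda>xs. return_pmf (x # xs)))"

definition sinit :: sstate where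
  "sinit = ((\<lambda>v. v), [(1, 2)])"

definition sstep :: "real \<Rightarrow> nat \<Rightarrow> nat \<Rightarrow> sstate \<Rightarrow> sstate pmf" where
  "sstep a d i S = (case S of (col, E) \<Rightarrow>
     bernoulli_pmf ((ln (real i)) powr (- a)) \<bind> (\<lambda>newcol.
       if newcol then
         pmf_of_multiset (endpoints E) \<bind> (\<lambda>u.
         iid_pmf (d - 1) (pmf_of_set {v \<in> {1..<i}. col v = v}) \<bind> (\<lambda>us.
         return_pmf (col(i := i), E @ map (\<lambda>w. (i, w)) (u # us))))
       else
         pmf_of_set (col ` {1..<i}) \<bind> (\<lambda>c.
         iid_pmf d (pmf_of_multiset (filter_mset (\<lambda>v. col v = c) (endpoints E))) \<bind> (\<lambda>us.
         return_pmf (col(i := c), E @ map (\<lambda>w. (i, w)) us)))))"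

primrec secmodel :: "real \<Rightarrow> nat \<Rightarrow> nat \<Rightarrow> sstate pmf" where
  "secmodel a d 0 = return_pmf sinit"
| "secmodel a d (Suc m) =
     (if Suc m \<le> 2 then return_pmf sinit else secmodel a d m \<bind> sstep a d (Suc m))"

end

theory Submission
  imports Defs
begin

definition colstep :: "real \<Rightarrow> nat \<Rightarrow> (nat \<Rightarrow> nat) \<Rightarrow> (nat \<Rightarrow> nat) pmf" where
 "colstep a i col = bernoulli_pmf ((ln (real i)) powr (- a)) \<bind> (\<lambda>b. if b then return_pmf (col(i:=i))
     else map_pmf (\<lambda>c. col(i:=c)) (pmf_of_set (col ` {1..<i})))"

primrec cm :: "real \<Rightarrow> nat \<Rightarrow> (nat \<Rightarrow> nat) pmf" where
  "cm a 0 = return_pmf (\<lambda>v. v)"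
| "cm a (Suc m) = (if Suc m \<le> 2 then return_pmf (\<lambda>v. v) else cm a m \<bind> colstep a (Suc m))"

lemma map_fst_sstep: "map_pmf fst (sstep a d i S) = colstep a i (fst S)"
proof (cases S)
  case (Pair col E)
  show ?thesis unfolding Pair sstep_def colstep_def
    by (auto simp: map_bind_pmf map_pmf_comp map_pmf_const map_pmf_def[symmetric] intro!: bind_pmf_cong)
qed

lemma map_fst_secmodel: "map_pmf fst (secmodel a d m) = cm a m"
  by (induction m) (simp_all add: sinit_def map_bind_pmf map_fst_sstep bind_map_pmf[symmetric])

lemma colstep_nn:
  assumes p: "0 \<le> ln (real i) powr (-a)" "ln (real i) powr (-a) \<le> 1" and i: "i \<ge> 2"
    and h: "\<And>x. 0 \<le> h x"
  shows "(\<integral>\<^sup>+x. ennreal (h x) \<partial>colstep a i col) =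
    ennreal (ln (real i) powr (-a) * h (col(i:=i)) + (1 - ln (real i) powr (-a)) *
       ((\<Sum>c\<in>col ` {1..<i}. h (col(i:=c))) / card (col ` {1..<i})))"
proof -
  define p where "p = ln (real i) powr (-a)"
  define X where "X = col ` {1..<i}"
  have X: "finite X" "X \<noteq> {}" using i by (auto simp: X_def)
  have cX: "card X > 0" using X by (simp add: card_gt_0_iff)
  have "(\<integral>\<^sup>+x. ennreal (h x) \<partial>colstep a i col) =
     ennreal (h (col(i:=i))) * ennreal p + (\<Sum>c\<in>X. ennreal (h (col(i:=c)))) / ennreal (card X) * ennreal (1 - p)"
    using p X unfolding colstep_def p_def[symmetric] X_def[symmetric]
    by (simp add: nn_integral_pmf_of_set nn_integral_return ennreal_of_nat_eq_real_of_nat)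
  also have "\<dots> = ennreal (p * h (col(i:=i)) + (1 - p) * ((\<Sum>c\<in>X. h (col(i:=c))) / card X))"
    using p h cX unfolding p_def[symmetric]
    by (simp add: sum_ennreal sum_nonneg divide_ennreal ennreal_mult'[symmetric] ennreal_plus[symmetric] mult.commute
         del: ennreal_plus)
  finally show ?thesis unfolding p_def X_def .
qed

definition Sz :: "nat \<Rightarrow> (nat \<Rightarrow> nat) \<Rightarrow> nat \<Rightarrow> nat" where
  "Sz c col m = card {v\<in>{1..m}. col v = c}"
definition Kf :: "(nat \<Rightarrow> nat) \<Rightarrow> nat \<Rightarrow> nat" where
  "Kf col m = card (col ` {1..m})"
definition Tc :: "real \<Rightarrow> nat \<Rightarrow> nat \<Rightarrow> (nat \<Rightarrow> nat) \<Rightarrow> real" where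
  "Tc B c m col = (if col c = c then exp (- real (Sz c col m)) else 0) * (if real (Kf col m) \<le> B then 1 else 0)"

lemma Sz_upd: "Sz c (col(Suc m := x)) (Suc m) = Sz c col m + (if x = c then 1 else 0)"
proof -
  have "{v\<in>{1..Suc m}. (col(Suc m := x)) v = c} = {v\<in>{1..m}. col v = c} \<union> (if x = c then {Suc m} else {})"
    by auto
  then show ?thesis unfolding Sz_def by (simp add: card_insert_if)
qed

lemma Kf_mono: "Kf col m \<le> Kf (col(Suc m := x)) (Suc m)"
  unfolding Kf_def by (rule card_mono) auto

lemma Kf_upd_le: "Kf (col(Suc m := x)) (Suc m) \<le> Kf col m + 1"
proof -
  have "(col(Suc m := x)) ` {1..Suc m} = insert x (col ` {1..m})" by auto
  then show ?thesis unfolding Kf_def by (simp add: card_insert_if)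
qed

lemma Kf_upd_in: "x \<in> col ` {1..m} \<Longrightarrow> Kf (col(Suc m := x)) (Suc m) = Kf col m"
proof -
  have "(col(Suc m := x)) ` {1..Suc m} = insert x (col ` {1..m})" by auto
  then show "x \<in> col ` {1..m} \<Longrightarrow> ?thesis" unfolding Kf_def by (simp add: insert_absorb)
qed

lemma Tc_nonneg: "0 \<le> Tc B c m col" unfolding Tc_def by auto
lemma Tc_le1: "Tc B c m col \<le> 1" unfolding Tc_def by auto

lemma Tc_step:
  assumes c: "1 \<le> c" "c \<le> m" and p: "0 \<le> p" "p \<le> 1/2" and B: "B \<ge> 1"
  shows "p * Tc B c (Suc m) (col(Suc m := Suc m)) + (1 - p) *
     ((\<Sum>x\<in>col ` {1..m}. Tc B c (Suc m) (col(Suc m := x))) / card (col ` {1..m}))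
     \<le> (1 - 1 / (4 * B)) * Tc B c m col"
proof -
  define X where "X = col ` {1..m}"
  have X: "finite X" "X \<noteq> {}" using c by (auto simp: X_def)
  have cc: "\<And>x. (col(Suc m := x)) c = col c" using c by auto
  show ?thesis
  proof (cases "col c = c \<and> real (Kf col m) \<le> B")
    case False
    then have z: "Tc B c (Suc m) (col(Suc m := x)) = 0" for x
      using Kf_mono[of col m x] unfolding Tc_def cc by auto
    have "Tc B c m col = 0" using False unfolding Tc_def by auto
    then show ?thesis using z unfolding X_def[symmetric] by simp
  next
    case True
    define E where "E = exp (- real (Sz c col m))"
    have E: "E > 0" unfolding E_def by simp
    have T0: "Tc B c m col = E" using True unfolding Tc_def E_def by simp
    have T1: "Tc B c (Suc m) (col(Suc m := x)) \<le> E * (if x = c then exp (-1) else 1)" for x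
      unfolding Tc_def cc Sz_upd E_def by (auto simp: exp_diff exp_minus field_simps)
    have cX: "c \<in> X" using True c unfolding X_def by (metis atLeastAtMost_iff image_eqI)
    have KX: "card X = Kf col m" unfolding X_def Kf_def by simp
    have K1: "real (card X) \<ge> 1" using X by (simp add: Suc_leI card_gt_0_iff)
    have KB: "real (card X) \<le> B" using True KX by simp
    have sumE: "(\<Sum>x\<in>X. E * (if x = c then exp (-1) else 1)) = E * (card X - 1 + exp (-1))"
    proof -
      have "(\<Sum>x\<in>X. E * (if x = c then exp (-1) else 1)) = E * exp (-1) + (\<Sum>x\<in>X-{c}. E)"
        using X cX by (simp add: sum.remove[of X c] del: sum_constant)
      also have "\<dots> = E * (card X - 1 + exp (-1))" using X cX by (simp add: card_Diff_singleton algebra_simps of_nat_diff card_gt_0_iff Suc_leI)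
      finally show ?thesis .
    qed
    have s: "(\<Sum>x\<in>X. Tc B c (Suc m) (col(Suc m := x))) \<le> E * (card X - 1 + exp (-1))"
    proof -
      have "(\<Sum>x\<in>X. Tc B c (Suc m) (col(Suc m := x))) \<le> (\<Sum>x\<in>X. E * (if x = c then exp (-1) else 1))"
        by (rule sum_mono) (rule T1)
      then show ?thesis using sumE by simp
    qed
    have e1: "exp (-1::real) \<le> 1/2"
    proof -
      have "exp (1::real) \<ge> 2" using exp_ge_add_one_self[of 1] by simp
      then show ?thesis by (simp add: exp_minus field_simps)
    qed
    have "p * Tc B c (Suc m) (col(Suc m := Suc m)) \<le> p * E"
      using T1[of "Suc m"] c p by (intro mult_left_mono) auto
    moreover have "(1 - p) * ((\<Sum>x\<in>X. Tc B c (Suc m) (col(Suc m := x))) / card X)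
        \<le> (1 - p) * (E * (card X - 1 + exp (-1)) / card X)"
      using p s K1 by (intro mult_left_mono divide_right_mono) auto
    moreover have "p * E + (1 - p) * (E * (card X - 1 + exp (-1)) / card X) \<le> (1 - 1 / (4 * B)) * E"
    proof -
      have "E * (card X - 1 + exp (-1)) / card X = E - E * (1 - exp (-1)) / card X"
        using K1 by (simp add: field_simps)
      moreover have "E * (1 - exp (-1)) / card X \<ge> E / (2 * card X)"
        using e1 E K1 by (simp add: field_simps)
      moreover have "E / (2 * card X) \<ge> E / (2 * B)"
        using E K1 KB by (intro divide_left_mono) auto
      ultimately have "E * (card X - 1 + exp (-1)) / card X \<le> E - E / (2 * B)" by linarith
      then have "p * E + (1 - p) * (E * (card X - 1 + exp (-1)) / card X) \<le> p * E + (1 - p) * (E - E / (2 * B))"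
        using p by (intro add_left_mono mult_left_mono) auto
      also have "\<dots> = E - (1 - p) * (E / (2 * B))" by (simp add: algebra_simps)
      also have "\<dots> \<le> E - (1/2) * (E / (2 * B))"
        using p E B by (intro diff_left_mono mult_right_mono) auto
      also have "\<dots> = (1 - 1 / (4 * B)) * E" using B by (simp add: field_simps)
      finally show ?thesis .
    qed
    ultimately show ?thesis unfolding T0 X_def[symmetric] by linarith
  qed
qed

lemma ln_ge1: "i \<ge> 3 \<Longrightarrow> ln (real i) \<ge> 1"
proof -
  assume "i \<ge> 3"
  then have "exp 1 \<le> real i" using exp_le by linarith
  then show ?thesis using ln_le_cancel_iff[of "exp 1" "real i"] \<open>i \<ge> 3\<close> by simp
qed

lemma ln_ge2: "i \<ge> 9 \<Longrightarrow> ln (real i) \<ge> 2"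
proof -
  assume "i \<ge> 9"
  have "exp (2::real) = exp 1 * exp 1" by (simp flip: exp_add)
  also have "\<dots> \<le> 3 * 3" using exp_le by (intro mult_mono) auto
  finally have "exp 2 \<le> real i" using \<open>i \<ge> 9\<close> by linarith
  then show ?thesis using ln_le_cancel_iff[of "exp 2" "real i"] \<open>i \<ge> 9\<close> by simp
qed

lemma p_le1: "i \<ge> 3 \<Longrightarrow> a \<ge> 0 \<Longrightarrow> ln (real i) powr (-a) \<le> 1"
  using ln_ge1[of i] ge_one_powr_ge_zero[of "ln (real i)" a]
  by (simp add: powr_minus field_simps)

lemma p_le_half: "i \<ge> 9 \<Longrightarrow> a \<ge> 1 \<Longrightarrow> ln (real i) powr (-a) \<le> 1/2"
proof -
  assume i: "i \<ge> 9" and a: "a \<ge> 1"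
  have "2 = (2::real) powr 1" by simp
  also have "\<dots> \<le> 2 powr a" using a by (intro powr_mono) auto
  also have "\<dots> \<le> ln (real i) powr a" using ln_ge2[OF i] a by (intro powr_mono2) auto
  finally have "inverse (ln (real i) powr a) \<le> inverse 2" by (rule le_imp_inverse_le) simp
  then show ?thesis by (simp add: powr_minus)
qed


definition Psi :: "nat set \<Rightarrow> real \<Rightarrow> nat \<Rightarrow> (nat \<Rightarrow> nat) \<Rightarrow> real" where
  "Psi Os B m col = (\<Sum>c\<in>Os. Tc B c m col)"

lemma Psi_nonneg: "0 \<le> Psi Os B m col" unfolding Psi_def by (intro sum_nonneg Tc_nonneg)
lemma Psi_le: "Psi Os B m col \<le> card Os" unfolding Psi_def
  using sum_mono[of Os "\<lambda>c. Tc B c m col" "\<lambda>_. 1"] Tc_le1 by simp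

lemma Psi_step_nn:
  assumes Os: "Os \<subseteq> {1..m}" and m: "m \<ge> 8" and B: "B \<ge> 1" and a: "a \<ge> 1"
  shows "(\<integral>\<^sup>+x. ennreal (Psi Os B (Suc m) x) \<partial>colstep a (Suc m) col) \<le> ennreal ((1 - 1/(4*B)) * Psi Os B m col)"
proof -
  define p where "p = ln (real (Suc m)) powr (-a)"
  have p: "0 \<le> p" "p \<le> 1/2" using p_le_half[of "Suc m" a] m a unfolding p_def by auto
  have fO: "finite Os" using Os finite_subset by blast
  have e: "{1..<Suc m} = {1..m}" by auto
  define X where "X = col ` {1..m}"
  have "p * Psi Os B (Suc m) (col(Suc m := Suc m)) + (1 - p) * ((\<Sum>x\<in>X. Psi Os B (Suc m) (col(Suc m := x))) / card X)
     = (\<Sum>c\<in>Os. p * Tc B c (Suc m) (col(Suc m := Suc m)) + (1 - p) * ((\<Sum>x\<in>X. Tc B c (Suc m) (col(Suc m := x))) / card X))"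
  proof -
    have 1: "(\<Sum>x\<in>X. Psi Os B (Suc m) (col(Suc m := x))) = (\<Sum>c\<in>Os. \<Sum>x\<in>X. Tc B c (Suc m) (col(Suc m := x)))"
      unfolding Psi_def by (rule sum.swap)
    show ?thesis unfolding 1 unfolding Psi_def by (simp add: sum.distrib sum_distrib_left sum_divide_distrib)
  qed
  also have "\<dots> \<le> (\<Sum>c\<in>Os. (1 - 1 / (4 * B)) * Tc B c m col)"
    unfolding X_def using Os p B by (intro sum_mono Tc_step) auto
  also have "\<dots> = (1 - 1/(4*B)) * Psi Os B m col" unfolding Psi_def by (simp add: sum_distrib_left)
  finally have le: "p * Psi Os B (Suc m) (col(Suc m := Suc m)) + (1 - p) * ((\<Sum>x\<in>X. Psi Os B (Suc m) (col(Suc m := x))) / card X)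
      \<le> (1 - 1/(4*B)) * Psi Os B m col" .
  have eq: "(\<integral>\<^sup>+x. ennreal (Psi Os B (Suc m) x) \<partial>colstep a (Suc m) col) =
    ennreal (p * Psi Os B (Suc m) (col(Suc m := Suc m)) + (1 - p) * ((\<Sum>x\<in>X. Psi Os B (Suc m) (col(Suc m := x))) / card X))"
    unfolding p_def X_def e[symmetric]
    by (rule colstep_nn) (use p m in \<open>auto simp: p_def intro: Psi_nonneg\<close>)
  show ?thesis unfolding eq by (rule ennreal_leI) (rule le)
qed

lemma Psi_chain:
  assumes Os: "Os \<subseteq> {1..m0}" and m0: "m0 \<ge> 8" and B: "B \<ge> 1" and a: "a \<ge> 1" and m: "m \<ge> m0"
  shows "(\<integral>\<^sup>+x. ennreal (Psi Os B m x) \<partial>cm a m) \<le> ennreal ((1 - 1/(4*B)) ^ (m - m0) * card Os)"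
  using m
proof (induction m rule: dec_induct)
  case base
  have "(\<integral>\<^sup>+x. ennreal (Psi Os B m0 x) \<partial>cm a m0) \<le> (\<integral>\<^sup>+x. ennreal (card Os) \<partial>cm a m0)"
    by (intro nn_integral_mono ennreal_leI Psi_le)
  then show ?case by (simp add: measure_pmf.emeasure_space_1)
next
  case (step m)
  have r: "0 \<le> 1 - 1/(4*B)" using B by (simp add: field_simps)
  have "(\<integral>\<^sup>+x. ennreal (Psi Os B (Suc m) x) \<partial>cm a (Suc m))
      = (\<integral>\<^sup>+col. (\<integral>\<^sup>+x. ennreal (Psi Os B (Suc m) x) \<partial>colstep a (Suc m) col) \<partial>cm a m)"
    using step m0 by simp
  also have "\<dots> \<le> (\<integral>\<^sup>+col. ennreal (1 - 1/(4*B)) * ennreal (Psi Os B m col) \<partial>cm a m)"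
    using Os step m0 B a r by (intro nn_integral_mono) (auto simp: ennreal_mult'[symmetric] intro!: Psi_step_nn)
  also have "\<dots> = ennreal (1 - 1/(4*B)) * (\<integral>\<^sup>+col. ennreal (Psi Os B m col) \<partial>cm a m)"
    by (simp add: nn_integral_cmult)
  also have "\<dots> \<le> ennreal (1 - 1/(4*B)) * ennreal ((1 - 1/(4*B)) ^ (m - m0) * card Os)"
    by (intro mult_left_mono step.IH) auto
  also have "\<dots> = ennreal ((1 - 1/(4*B)) ^ (Suc m - m0) * card Os)"
    using r step by (simp add: ennreal_mult'[symmetric] Suc_diff_le)
  finally show ?case .
qed

lemma Kf_step_nn:
  assumes m: "m \<ge> 2" and a: "a \<ge> 0"
  shows "(\<integral>\<^sup>+x. ennreal (real (Kf x (Suc m))) \<partial>colstep a (Suc m) col) \<le> ennreal (real (Kf col m) + ln (real (Suc m)) powr (-a))"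
proof -
  define p where "p = ln (real (Suc m)) powr (-a)"
  have p: "0 \<le> p" "p \<le> 1" using p_le1[of "Suc m" a] m a unfolding p_def by auto
  have e: "{1..<Suc m} = {1..m}" by auto
  define X where "X = col ` {1..m}"
  have X: "finite X" "X \<noteq> {}" using m by (auto simp: X_def)
  have cX: "card X > 0" using X by (simp add: card_gt_0_iff)
  have "(\<Sum>x\<in>X. real (Kf (col(Suc m := x)) (Suc m))) = (\<Sum>x\<in>X. real (Kf col m))"
    by (intro sum.cong refl) (simp add: Kf_upd_in X_def)
  then have s: "(\<Sum>x\<in>X. real (Kf (col(Suc m := x)) (Suc m))) / card X = Kf col m"
    using cX by simp
  have eq: "(\<integral>\<^sup>+x. ennreal (real (Kf x (Suc m))) \<partial>colstep a (Suc m) col) =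
    ennreal (p * real (Kf (col(Suc m := Suc m)) (Suc m)) + (1 - p) * ((\<Sum>x\<in>X. real (Kf (col(Suc m := x)) (Suc m))) / card X))"
    unfolding p_def X_def e[symmetric]
    by (rule colstep_nn) (use p m in \<open>auto simp: p_def\<close>)
  have "p * real (Kf (col(Suc m := Suc m)) (Suc m)) \<le> p * (real (Kf col m) + 1)"
    using Kf_upd_le[of col m "Suc m"] p by (intro mult_left_mono) auto
  then have le: "p * real (Kf (col(Suc m := Suc m)) (Suc m)) + (1 - p) * ((\<Sum>x\<in>X. real (Kf (col(Suc m := x)) (Suc m))) / card X)
     \<le> real (Kf col m) + p" unfolding s by (simp add: algebra_simps)
  show ?thesis unfolding eq p_def[symmetric] by (rule ennreal_leI) (rule le)
qed

lemma cm2: "cm a 2 = return_pmf (\<lambda>v. v)"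
  by (simp add: numeral_2_eq_2)

lemma Kf_chain:
  assumes a: "a \<ge> 0" and N: "N \<ge> 2"
  shows "(\<integral>\<^sup>+x. ennreal (real (Kf x N)) \<partial>cm a N) \<le> ennreal (2 + (\<Sum>i\<in>{3..N}. ln (real i) powr (-a)))"
  using N
proof (induction N rule: dec_induct)
  case base
  have "Kf (\<lambda>v. v) 2 = 2" unfolding Kf_def by simp
  then show ?case by (simp add: cm2 nn_integral_return)
next
  case (step m)
  have "(\<integral>\<^sup>+x. ennreal (real (Kf x (Suc m))) \<partial>cm a (Suc m))
      = (\<integral>\<^sup>+col. (\<integral>\<^sup>+x. ennreal (real (Kf x (Suc m))) \<partial>colstep a (Suc m) col) \<partial>cm a m)"
    using step by simp
  also have "\<dots> \<le> (\<integral>\<^sup>+col. ennreal (real (Kf col m)) + ennreal (ln (real (Suc m)) powr (-a)) \<partial>cm a m)"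
  proof (rule nn_integral_mono)
    fix col
    have "ennreal (real (Kf col m) + ln (real (Suc m)) powr (-a)) = ennreal (real (Kf col m)) + ennreal (ln (real (Suc m)) powr (-a))"
      by (rule ennreal_plus) auto
    then show "(\<integral>\<^sup>+x. ennreal (real (Kf x (Suc m))) \<partial>colstep a (Suc m) col) \<le> ennreal (real (Kf col m)) + ennreal (ln (real (Suc m)) powr (-a))"
      using Kf_step_nn[OF step(1) a, of col] by simp
  qed
  also have "\<dots> = (\<integral>\<^sup>+col. ennreal (real (Kf col m)) \<partial>cm a m) + ennreal (ln (real (Suc m)) powr (-a))"
    by (simp add: nn_integral_add measure_pmf.emeasure_space_1)
  also have "\<dots> \<le> ennreal (2 + (\<Sum>i\<in>{3..m}. ln (real i) powr (-a))) + ennreal (ln (real (Suc m)) powr (-a))"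
    by (intro add_right_mono step.IH)
  also have "\<dots> = ennreal (2 + (\<Sum>i\<in>{3..Suc m}. ln (real i) powr (-a)))"
    using step by (simp add: ennreal_plus[symmetric] sum_nonneg add.assoc del: ennreal_plus)
  finally show ?case .
qed

lemma markov_pmf:
  fixes M :: "'a pmf" and f :: "'a \<Rightarrow> real"
  assumes A: "\<And>x. x \<in> A \<Longrightarrow> c \<le> f x" and f: "\<And>x. 0 \<le> f x"
    and I: "(\<integral>\<^sup>+x. ennreal (f x) \<partial>M) \<le> ennreal U" and c: "c > 0" and U: "U \<ge> 0"
  shows "measure_pmf.prob M A \<le> U / c"
proof -
  have "ennreal (c * measure_pmf.prob M A) = ennreal c * emeasure M A"
    using c by (simp add: measure_pmf.emeasure_eq_measure ennreal_mult)
  also have "\<dots> = (\<integral>\<^sup>+x. ennreal c * indicator A x \<partial>M)"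
    by (simp add: nn_integral_cmult_indicator)
  also have "\<dots> \<le> (\<integral>\<^sup>+x. ennreal (f x) \<partial>M)"
    by (intro nn_integral_mono) (auto simp: indicator_def A ennreal_leI)
  also note I
  finally have "c * measure_pmf.prob M A \<le> U" using U by (simp add: ennreal_le_iff)
  then show ?thesis using c by (simp add: field_simps)
qed

lemma bad_bound:
  assumes a: "a \<ge> 1" and B: "B \<ge> 1" and Os: "Os = {c\<in>{1..n}. real c < T}" and Osm: "Os \<subseteq> {1..m0}"
    and m0: "m0 \<ge> 8" "m0 \<le> n" and y: "y \<ge> 0"
  shows "measure_pmf.prob (cm a n) {col. \<exists>c\<in>{1..n}. col c = c \<and> real c < T \<and> \<not> y \<le> real (Sz c col n)}
     \<le> (2 + (\<Sum>i\<in>{3..n}. ln (real i) powr (-a))) / B + (1 - 1/(4*B)) ^ (n - m0) * card Os / exp (-y)"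
proof -
  define A1 where "A1 = {col. B \<le> real (Kf col n)}"
  define A2 where "A2 = {col. exp (-y) \<le> Psi Os B n col}"
  have sub: "{col. \<exists>c\<in>{1..n}. col c = c \<and> real c < T \<and> \<not> y \<le> real (Sz c col n)} \<subseteq> A1 \<union> A2"
  proof
    fix col assume "col \<in> {col. \<exists>c\<in>{1..n}. col c = c \<and> real c < T \<and> \<not> y \<le> real (Sz c col n)}"
    then obtain c where c: "c \<in> {1..n}" "col c = c" "real c < T" "real (Sz c col n) < y" by auto
    show "col \<in> A1 \<union> A2"
    proof (cases "real (Kf col n) \<le> B")
      case False then show ?thesis by (simp add: A1_def)
    next
      case True
      have cO: "c \<in> Os" using c Os by auto
      have fO: "finite Os" using Osm finite_subset by blast
      have "exp (-y) \<le> Tc B c n col" using True c unfolding Tc_def by simp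
      also have "\<dots> \<le> Psi Os B n col" unfolding Psi_def
        using fO cO by (intro member_le_sum Tc_nonneg) auto
      finally show ?thesis by (simp add: A2_def)
    qed
  qed
  have r: "0 \<le> 1 - 1/(4*B)" using B by (simp add: field_simps)
  have "measure_pmf.prob (cm a n) {col. \<exists>c\<in>{1..n}. col c = c \<and> real c < T \<and> \<not> y \<le> real (Sz c col n)}
      \<le> measure_pmf.prob (cm a n) (A1 \<union> A2)"
    by (intro measure_pmf.finite_measure_mono sub) auto
  also have "\<dots> \<le> measure_pmf.prob (cm a n) A1 + measure_pmf.prob (cm a n) A2"
    by (intro measure_subadditive) auto
  finally have calc0: "measure_pmf.prob (cm a n) {col. \<exists>c\<in>{1..n}. col c = c \<and> real c < T \<and> \<not> y \<le> real (Sz c col n)}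
      \<le> measure_pmf.prob (cm a n) A1 + measure_pmf.prob (cm a n) A2" .
  have s0: "0 \<le> (\<Sum>i\<in>{3..n}. ln (real i) powr (-a))" by (intro sum_nonneg) auto
  have "measure_pmf.prob (cm a n) A1 \<le> (2 + (\<Sum>i\<in>{3..n}. ln (real i) powr (-a))) / B"
    using B a m0 s0 by (intro markov_pmf[where f = "\<lambda>col. real (Kf col n)"] Kf_chain) (auto simp: A1_def)
  moreover have "measure_pmf.prob (cm a n) A2 \<le> (1 - 1/(4*B)) ^ (n - m0) * card Os / exp (-y)"
    using B a m0 Osm r by (intro markov_pmf[where f = "Psi Os B n"] Psi_chain) (auto simp: A2_def intro: Psi_nonneg)
  ultimately show ?thesis using calc0 by linarith
qed


lemma helperA:
  fixes c g :: real assumes c: "c > 0"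
  shows "((\<lambda>L. L powr g * exp (-(c*L))) \<longlongrightarrow> 0) at_top"
proof -
  have lim: "((\<lambda>L::real. g * (ln L / L) - c) \<longlongrightarrow> g*0 - c) at_top"
    by (intro tendsto_intros ln_x_over_x_tendsto_0)
  have "filterlim (\<lambda>L. (g * (ln L / L) - c) * L) at_bot at_top"
    by (rule filterlim_tendsto_neg_mult_at_bot[OF lim]) (use c in \<open>auto simp: filterlim_ident\<close>)
  then have "((\<lambda>L. exp ((g * (ln L / L) - c) * L)) \<longlongrightarrow> 0) at_top"
    by (rule filterlim_compose[OF exp_at_bot])
  moreover have "eventually (\<lambda>L. exp ((g * (ln L / L) - c) * L) = L powr g * exp (-(c*L))) at_top"
    using eventually_gt_at_top[of 0]
    by eventually_elim (simp add: powr_def exp_add[symmetric] field_simps)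
  ultimately show ?thesis by (rule Lim_transform_eventually)
qed

lemma helperB:
  fixes b e :: real assumes "1 < b" "b < e"
  shows "filterlim (\<lambda>L. L + L powr b - L powr e / 8) at_bot at_top"
proof -
  have lim: "((\<lambda>L::real. L powr (1 - e) + L powr (b - e) - 1/8) \<longlongrightarrow> 0 + 0 - 1/8) at_top"
    using assms by (intro tendsto_intros tendsto_neg_powr filterlim_ident) auto
  have top: "filterlim (\<lambda>L::real. L powr e) at_top at_top"
  proof (rule filterlim_at_top_mono[OF filterlim_ident])
    show "eventually (\<lambda>L. L \<le> L powr e) at_top"
      using eventually_ge_at_top[of 1]
    proof eventually_elim
      case (elim L)
      have "L powr 1 \<le> L powr e" using elim assms by (intro powr_mono) auto
      then show ?case using elim by simp
    qed
  qed
  have "filterlim (\<lambda>L. (L powr (1 - e) + L powr (b - e) - 1/8) * L powr e) at_bot at_top"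
    by (rule filterlim_tendsto_neg_mult_at_bot[OF lim _ top]) simp
  moreover have "eventually (\<lambda>L. (L powr (1 - e) + L powr (b - e) - 1/8) * L powr e = L + L powr b - L powr e / 8) at_top"
    using eventually_gt_at_top[of 0]
  proof eventually_elim
    case (elim L)
    have "L powr (1 - e) * L powr e = L" using elim by (simp add: powr_add[symmetric])
    moreover have "L powr (b - e) * L powr e = L powr b" using elim by (simp add: powr_add[symmetric])
    ultimately show ?case by (simp add: algebra_simps)
  qed
  ultimately show ?thesis by (simp add: filterlim_cong[OF refl refl])
qed

lemma sum_p_bound:
  assumes n: "n \<ge> 3" and a: "a \<ge> 0"
  shows "(\<Sum>i\<in>{3..n}. ln (real i) powr (-a)) \<le> sqrt (real n) + real n * (ln (real n) / 2) powr (-a)"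
proof -
  define q where "q = (ln (real n) / 2) powr (-a)"
  have q0: "q \<ge> 0" unfolding q_def by simp
  have ln0: "ln (real n) > 0" using n by simp
  have trm: "ln (real i) powr (-a) \<le> (if real i \<le> sqrt (real n) then 1 else 0) + q" if i: "i \<in> {3..n}" for i
  proof (cases "real i \<le> sqrt (real n)")
    case True
    then show ?thesis using p_le1[of i a] i a q0 by auto
  next
    case False
    have "ln (sqrt (real n)) \<le> ln (real i)" using False n i by (subst ln_le_cancel_iff) auto
    moreover have "ln (sqrt (real n)) = ln (real n) / 2" using n by (simp add: ln_sqrt)
    ultimately have "ln (real n) / 2 \<le> ln (real i)" by simp
    then have "ln (real i) powr (-a) \<le> q" unfolding q_def using a ln0 by (intro powr_mono2') auto
    then show ?thesis using False by simp
  qed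
  have "(\<Sum>i\<in>{3..n}. ln (real i) powr (-a)) \<le> (\<Sum>i\<in>{3..n}. (if real i \<le> sqrt (real n) then 1 else 0) + q)"
    by (rule sum_mono) (rule trm)
  also have "\<dots> = real (card {i\<in>{3..n}. real i \<le> sqrt (real n)}) + real (card {3..n}) * q"
  proof -
    have "{3..n} \<inter> {i. real i \<le> sqrt (real n)} = {i\<in>{3..n}. real i \<le> sqrt (real n)}" by auto
    then show ?thesis by (simp add: sum.distrib sum.If_cases)
  qed
  also have "real (card {i\<in>{3..n}. real i \<le> sqrt (real n)}) \<le> sqrt (real n)"
  proof -
    have "{i\<in>{3..n}. real i \<le> sqrt (real n)} \<subseteq> {1..nat \<lfloor>sqrt (real n)\<rfloor>}"
      by (auto simp: le_nat_floor)
    then have "card {i\<in>{3..n}. real i \<le> sqrt (real n)} \<le> nat \<lfloor>sqrt (real n)\<rfloor>"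
      using card_mono[of "{1..nat \<lfloor>sqrt (real n)\<rfloor>}"] by fastforce
    then have "real (card {i\<in>{3..n}. real i \<le> sqrt (real n)}) \<le> real (nat \<lfloor>sqrt (real n)\<rfloor>)" by linarith
    also have "\<dots> \<le> sqrt (real n)" by simp
    finally show ?thesis .
  qed
  also have "real (card {3..n}) * q \<le> real n * q" using q0 by (intro mult_right_mono) auto
  finally show ?thesis unfolding q_def by simp
qed


lemma prob_bad_le:
  fixes a b0 b1 g e :: real and n :: nat
  assumes a: "a \<ge> 1" and e: "e = g - b0"
    and n16: "n \<ge> 16"
    and E2: "ln (real n) powr (-b0) \<le> 1/2"
    and E3: "ln (real n) powr b0 * exp (-(1 * ln (real n))) \<le> 1/4"
    and E4: "ln (real n) powr g * exp (-(1 * ln (real n))) \<le> 1"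
  shows "measure_pmf.prob (cm a n) {col. \<exists>c\<in>{1..n}. col c = c \<and> real c < (1 - ln (real n) powr (-b0)) * real n
            \<and> \<not> ln (real n) powr b1 \<le> real (Sz c col n)}
     \<le> 2 * (ln (real n) powr g * exp (-(1 * ln (real n)))) + ln (real n) powr g * exp (-((1/2) * ln (real n)))
        + 2 powr a * ln (real n) powr (g - a) + exp (ln (real n) + ln (real n) powr b1 - ln (real n) powr e / 8)"
proof -
  define L where "L = ln (real n)"
  define N where "N = real n"
  have N16: "N \<ge> 16" using n16 unfolding N_def by simp
  have expL: "exp L = N" unfolding L_def N_def using n16 by simp
  have L0: "L > 0" unfolding L_def using n16 by simp
  have eL: "exp (-(1 * L)) = 1 / N" using expL by (simp add: exp_minus field_simps)
  have sq: "exp (-((1/2) * L)) = 1 / sqrt N"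
  proof -
    have "sqrt N = N powr (1/2)" using N16 by (simp add: powr_half_sqrt)
    also have "\<dots> = exp ((1/2) * L)" unfolding powr_def L_def N_def using n16 by simp
    finally show ?thesis by (simp add: exp_minus field_simps)
  qed
  have pg: "L powr g > 0" "L powr b0 > 0" "L powr a > 0" using L0 by auto
  have pm: "L powr (-x) = 1 / L powr x" for x using L0 by (simp add: powr_minus field_simps)
  define T where "T = (1 - L powr (-b0)) * N"
  have T: "T \<ge> N / 2" "T \<le> N"
  proof -
    have p2: "L powr (-b0) \<le> 1/2" using E2 unfolding L_def .
    have "N * L powr (-b0) \<le> N * (1/2)" using p2 N16 by (intro mult_left_mono) auto
    moreover have "0 \<le> N * L powr (-b0)" using N16 by simp
    ultimately show "T \<ge> N / 2" "T \<le> N" unfolding T_def by (simp_all add: algebra_simps)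
  qed
  define m0 where "m0 = nat \<lceil>T\<rceil>"
  have T0: "T \<ge> 0" using T N16 by linarith
  have m0eq: "real m0 = of_int \<lceil>T\<rceil>" unfolding m0_def using T0 by simp
  have m0T: "T \<le> real m0" "real m0 \<le> T + 1" unfolding m0eq
    using le_of_int_ceiling[of T] ceiling_correct[of T] by linarith+
  have m08: "m0 \<ge> 8"
  proof -
    have "8 \<le> real m0" using m0T T N16 by linarith
    then show ?thesis by linarith
  qed
  have m0n: "m0 \<le> n"
  proof -
    have "T \<le> real n" using T(2) unfolding N_def .
    then have "\<lceil>T\<rceil> \<le> int n" by (simp add: ceiling_le_iff)
    then show ?thesis unfolding m0_def by linarith
  qed
  define Os where "Os = {c\<in>{1..n}. real c < T}"
  have Osm: "Os \<subseteq> {1..m0}"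
  proof
    fix c assume "c \<in> Os"
    then have "c \<in> {1..n}" "real c < real m0" using m0T unfolding Os_def by auto
    then show "c \<in> {1..m0}" by auto
  qed
  have cardOs: "real (card Os) \<le> N"
  proof -
    have "card Os \<le> card {1..n}" unfolding Os_def by (intro card_mono) auto
    then show ?thesis unfolding N_def by simp
  qed
  define B where "B = N * L powr (-g)"
  have B: "B = N / L powr g" unfolding B_def pm by simp
  have B1: "B \<ge> 1"
  proof -
    have "L powr g / N \<le> 1" using E4 unfolding L_def[symmetric] eL by simp
    then have "L powr g \<le> N" using N16 by (simp add: field_simps)
    then show ?thesis unfolding B using pg by (simp add: field_simps)
  qed
  define y where "y = L powr b1"
  have y0: "y \<ge> 0" unfolding y_def by simp
  have main: "measure_pmf.prob (cm a n) {col. \<exists>c\<in>{1..n}. col c = c \<and> real c < T \<and> \<not> y \<le> real (Sz c col n)}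
     \<le> (2 + (\<Sum>i\<in>{3..n}. ln (real i) powr (-a))) / B + (1 - 1/(4*B)) ^ (n - m0) * card Os / exp (-y)"
    by (rule bad_bound[OF a B1 Os_def Osm m08 m0n y0])
  have U1: "(2 + (\<Sum>i\<in>{3..n}. ln (real i) powr (-a))) / B
      \<le> 2 * (L powr g * exp (-(1 * L))) + L powr g * exp (-((1/2) * L)) + 2 powr a * L powr (g - a)"
  proof -
    have "(2 + (\<Sum>i\<in>{3..n}. ln (real i) powr (-a))) / B \<le> (2 + sqrt N + N * (L / 2) powr (-a)) / B"
      using sum_p_bound[of n a] n16 a B1 unfolding N_def L_def by (intro divide_right_mono) auto
    also have "(L / 2) powr (-a) = 2 powr a / L powr a"
      using L0 by (simp add: powr_divide pm powr_minus field_simps)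
    also have "(2 + sqrt N + N * (2 powr a / L powr a)) / B =
        2 * (L powr g * (1 / N)) + L powr g * (1 / sqrt N) + 2 powr a * (L powr g / L powr a)"
      unfolding B using N16 pg by (simp add: field_simps real_sqrt_mult[symmetric])
    finally show ?thesis unfolding eL sq by (simp add: powr_diff)
  qed
  have U2: "(1 - 1/(4*B)) ^ (n - m0) * card Os / exp (-y) \<le> exp (L + y - L powr e / 8)"
  proof -
    define k where "k = n - m0"
    have rk: "real k = N - real m0" unfolding k_def N_def using m0n by simp
    have Nb: "N / L powr b0 \<ge> 4"
    proof -
      have "L powr b0 / N \<le> 1/4" using E3 unfolding L_def[symmetric] eL by simp
      then show ?thesis using N16 pg by (simp add: field_simps)
    qed
    have Tval: "T = N - N / L powr b0" unfolding T_def pm by (simp add: algebra_simps)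
    have kb: "real k \<ge> N / L powr b0 / 2"
    proof -
      define Q where "Q = N / L powr b0"
      have "real k \<ge> Q - 1" using rk m0T Tval unfolding Q_def by linarith
      then have "real k \<ge> Q / 2" using Nb unfolding Q_def[symmetric] by linarith
      then show ?thesis unfolding Q_def .
    qed
    have r0: "0 \<le> 1 - 1/(4*B)" using B1 by (simp add: field_simps)
    have r1: "1 - 1/(4*B) \<le> exp (-(1/(4*B)))" using exp_ge_add_one_self[of "-(1/(4*B))"] by simp
    have "(1 - 1/(4*B)) ^ k \<le> exp (-(1/(4*B))) ^ k" by (intro power_mono r1 r0)
    also have "\<dots> = exp (- (real k / (4*B)))" by (simp add: exp_of_nat_mult[symmetric])
    also have "\<dots> \<le> exp (- (L powr e / 8))"
    proof -
      have "L powr e / 8 = (N / L powr b0 / 2) / (4 * B)"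
        unfolding e B using N16 pg by (simp add: powr_diff field_simps)
      also have "\<dots> \<le> real k / (4 * B)" using kb B1 by (intro divide_right_mono) auto
      finally show ?thesis by simp
    qed
    finally have rkle: "(1 - 1/(4*B)) ^ k \<le> exp (- (L powr e / 8))" .
    have "(1 - 1/(4*B)) ^ k * card Os / exp (-y) = (1 - 1/(4*B)) ^ k * card Os * exp y"
      by (simp add: exp_minus field_simps)
    also have "\<dots> \<le> exp (- (L powr e / 8)) * N * exp y"
      using rkle cardOs r0 by (intro mult_right_mono mult_mono) auto
    also have "\<dots> = exp (L + y - L powr e / 8)" unfolding expL[symmetric] by (simp add: exp_add[symmetric] exp_diff)
    finally show ?thesis unfolding k_def .
  qed
  show ?thesis using main U1 U2 unfolding T_def y_def L_def N_def by linarith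
qed

theorem lemma13:
  fixes a b0 b1 :: real and d :: nat
  assumes "a > 4" and "d \<ge> 4" and "b0 > 0" and "2 < b1" and "b1 < a - b0"
  shows "\<exists>C>0. (\<lambda>n. measure_pmf.prob (secmodel a d n)
           {G. \<forall>c\<in>{1..n}. fst G c = c \<and> real c < (1 - (ln (real n)) powr (- b0)) * real n
                 \<longrightarrow> C * (ln (real n)) powr b1 \<le> real (card {v\<in>{1..n}. fst G v = c})})
         \<longlonglongrightarrow> 1"
proof -
  define g where "g = (a + b0 + b1) / 2"
  define e where "e = g - b0"
  have a1: "a \<ge> 1" using assms by simp
  have be: "1 < b1" "b1 < e" using assms unfolding e_def g_def by (auto simp: field_simps)
  have ga: "g - a < 0" using assms unfolding g_def by auto
  define W where "W = (\<lambda>L::real. 2 * (L powr g * exp (-(1 * L))) + L powr g * exp (-((1/2) * L))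
        + 2 powr a * L powr (g - a) + exp (L + L powr b1 - L powr e / 8))"
  have Wlim: "(W \<longlongrightarrow> 0) at_top"
  proof -
    have l1: "((\<lambda>L::real. L powr g * exp (-(1 * L))) \<longlongrightarrow> 0) at_top" by (rule helperA) simp
    have l2: "((\<lambda>L::real. L powr g * exp (-((1/2) * L))) \<longlongrightarrow> 0) at_top" by (rule helperA) simp
    have l3: "((\<lambda>L::real. L powr (g - a)) \<longlongrightarrow> 0) at_top" by (rule tendsto_neg_powr[OF ga filterlim_ident])
    have l4: "((\<lambda>L::real. exp (L + L powr b1 - L powr e / 8)) \<longlongrightarrow> 0) at_top"
      by (rule filterlim_compose[OF exp_at_bot helperB[OF be]])
    have "(W \<longlongrightarrow> 2 * 0 + 0 + 2 powr a * 0 + 0) at_top"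
      unfolding W_def by (intro tendsto_add tendsto_mult l1 l2 l3 l4 tendsto_const)
    then show ?thesis by simp
  qed
  have lnlim: "filterlim (\<lambda>n. ln (real n)) at_top sequentially"
    by (rule filterlim_compose[OF ln_at_top filterlim_real_sequentially])
  have Wn: "((\<lambda>n. W (ln (real n))) \<longlongrightarrow> 0) sequentially"
    by (rule filterlim_compose[OF Wlim lnlim])
  have ev1: "eventually (\<lambda>n. n \<ge> (16::nat)) sequentially" by (rule eventually_ge_at_top)
  have ev2: "eventually (\<lambda>n. ln (real n) powr (-b0) < 1/2) sequentially"
  proof -
    have "((\<lambda>n. ln (real n) powr (-b0)) \<longlongrightarrow> 0) sequentially"
      using assms by (intro tendsto_neg_powr lnlim) auto
    then show ?thesis by (rule order_tendstoD) simp
  qed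
  have ev3: "eventually (\<lambda>n. ln (real n) powr b0 * exp (-(1 * ln (real n))) < 1/4) sequentially"
  proof -
    have "((\<lambda>n. ln (real n) powr b0 * exp (-(1 * ln (real n)))) \<longlongrightarrow> 0) sequentially"
      by (rule filterlim_compose[OF helperA lnlim]) simp
    then show ?thesis by (rule order_tendstoD) simp
  qed
  have ev4: "eventually (\<lambda>n. ln (real n) powr g * exp (-(1 * ln (real n))) < 1) sequentially"
  proof -
    have "((\<lambda>n. ln (real n) powr g * exp (-(1 * ln (real n)))) \<longlongrightarrow> 0) sequentially"
      by (rule filterlim_compose[OF helperA lnlim]) simp
    then show ?thesis by (rule order_tendstoD) simp
  qed
  define P where "P = (\<lambda>n. measure_pmf.prob (secmodel a d n)
           {G. \<forall>c\<in>{1..n}. fst G c = c \<and> real c < (1 - (ln (real n)) powr (- b0)) * real n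
                 \<longrightarrow> 1 * (ln (real n)) powr b1 \<le> real (card {v\<in>{1..n}. fst G v = c})})"
  have Peq: "P n = 1 - measure_pmf.prob (cm a n) {col. \<exists>c\<in>{1..n}. col c = c \<and> real c < (1 - ln (real n) powr (-b0)) * real n
            \<and> \<not> ln (real n) powr b1 \<le> real (Sz c col n)}" for n
  proof -
    define badC where "badC = {col. \<exists>c\<in>{1..n}. col c = c \<and> real c < (1 - ln (real n) powr (-b0)) * real n
            \<and> \<not> ln (real n) powr b1 \<le> real (Sz c col n)}"
    have "{G. \<forall>c\<in>{1..n}. fst G c = c \<and> real c < (1 - (ln (real n)) powr (- b0)) * real n
                 \<longrightarrow> 1 * (ln (real n)) powr b1 \<le> real (card {v\<in>{1..n}. fst G v = c})}
          = fst -` (UNIV - badC)"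
      unfolding badC_def Sz_def by auto
    then have "P n = measure_pmf.prob (map_pmf fst (secmodel a d n)) (UNIV - badC)"
      unfolding P_def measure_map_pmf by (rule arg_cong)
    also have "\<dots> = measure_pmf.prob (cm a n) (UNIV - badC)" by (simp add: map_fst_secmodel)
    also have "\<dots> = 1 - measure_pmf.prob (cm a n) badC"
      using measure_pmf.prob_compl[of badC "cm a n"] by simp
    finally show ?thesis unfolding badC_def .
  qed
  have lower: "eventually (\<lambda>n. 1 - W (ln (real n)) \<le> P n) sequentially"
    using ev1 ev2 ev3 ev4
  proof eventually_elim
    case (elim n)
    have "measure_pmf.prob (cm a n) {col. \<exists>c\<in>{1..n}. col c = c \<and> real c < (1 - ln (real n) powr (-b0)) * real n
            \<and> \<not> ln (real n) powr b1 \<le> real (Sz c col n)} \<le> W (ln (real n))"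
      unfolding W_def by (rule prob_bad_le[OF a1 e_def]) (use elim in auto)
    then show ?case unfolding Peq by linarith
  qed
  have upper: "eventually (\<lambda>n. P n \<le> 1) sequentially"
    unfolding P_def by (simp add: measure_pmf.prob_le_1)
  have "((\<lambda>n. 1 - W (ln (real n))) \<longlongrightarrow> 1 - 0) sequentially" by (intro tendsto_diff tendsto_const Wn)
  then have "P \<longlonglongrightarrow> 1" using tendsto_sandwich[OF lower upper] by simp
  then show ?thesis unfolding P_def by (intro exI[of _ 1]) simp
qed

end
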